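(* Let $T_{a_1\dots a_r}$ be a rank-$r$ tensor. Then $(T\,{}_i\!\times_i T)=0$ for all $i=1,\dots,r$ if and only if either $T=0$ or $T_{a_1\dots a_r}=k^{(1)}_{a_1}k^{(2)}_{a_2}\cdots k^{(r)}_{a_r}$ for some null vectors $k^{(1)},\dots,k^{(r)}$. Consequently, if $(T\,{}_i\!\times_i T)=0$ for all $i$, then $T\in\mathcal{DP}\cup-\mathcal{DP}$.
   Context: Lorentzian metric of signature $(+,-,\dots,-)$ with time orientation; null: $k\ne0$, $k\cdot k=0$; causal: $v\neq0$, $v\cdot v\ge0$. $(T\,{}_i\!\times_i T)$ is $T\otimes T$ with the $i$-th index of the first factor contracted with the $i$-th index of the second, other indices in order. $\mathcal{DP}$: tensors $X$ with $X_{a_1\dots a_r}u_1^{a_1}\cdots u_r^{a_r}\ge0$ for all causal future-pointing $u_j$; $-\mathcal{DP}$ their negatives. *)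

theory Defs
  imports Complex_Main
begin

text \<open>Minkowski space of dimension d with orthonormal basis e_0,...,e_(d-1),
  metric diag(+1,-1,...,-1); the time orientation is given by e_0.
  Vectors/covectors are functions nat => real, only components a < d matter.
  A rank-r tensor is a function on index lists; only lists of length r with
  entries < d matter.\<close>

definition eta :: "nat \<Rightarrow> real" where
  "eta a = (if a = 0 then 1 else -1)"

definition mink :: "nat \<Rightarrow> (nat \<Rightarrow> real) \<Rightarrow> (nat \<Rightarrow> real) \<Rightarrow> real" where
  "mink d v w = (\<Sum>a<d. eta a * v a * w a)"

definition nonzero_vec :: "nat \<Rightarrow> (nat \<Rightarrow> real) \<Rightarrow> bool" where
  "nonzero_vec d v \<longleftrightarrow> (\<exists>a<d. v a \<noteq> 0)"

definition null_vec :: "nat \<Rightarrow> (nat \<Rightarrow> real) \<Rightarrow> bool" where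
  "null_vec d k \<longleftrightarrow> nonzero_vec d k \<and> mink d k k = 0"

definition causal_vec :: "nat \<Rightarrow> (nat \<Rightarrow> real) \<Rightarrow> bool" where
  "causal_vec d v \<longleftrightarrow> nonzero_vec d v \<and> mink d v v \<ge> 0"

definition future_causal :: "nat \<Rightarrow> (nat \<Rightarrow> real) \<Rightarrow> bool" where
  "future_causal d v \<longleftrightarrow> causal_vec d v \<and> v 0 > 0"

definition idx :: "nat \<Rightarrow> nat \<Rightarrow> nat list set" where
  "idx d m = {xs. length xs = m \<and> set xs \<subseteq> {..<d}}"

definition ins_at :: "nat \<Rightarrow> nat \<Rightarrow> nat list \<Rightarrow> nat list" where
  "ins_at i c xs = take i xs @ c # drop i xs"

text \<open>(T _i x_i T) for a rank-r tensor T, i 0-based (i < r): a rank (2r-2) tensor;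
  the first r-1 indices are the free indices of the first factor, the last r-1
  those of the second factor, the contracted indices use the inverse metric.\<close>
definition self_contr ::
  "nat \<Rightarrow> nat \<Rightarrow> nat \<Rightarrow> (nat list \<Rightarrow> real) \<Rightarrow> nat list \<Rightarrow> real" where
  "self_contr d r i T xs =
     (\<Sum>c<d. eta c * T (ins_at i c (take (r - 1) xs)) * T (ins_at i c (drop (r - 1) xs)))"

definition tensor_zero :: "nat \<Rightarrow> nat \<Rightarrow> (nat list \<Rightarrow> real) \<Rightarrow> bool" where
  "tensor_zero d m T \<longleftrightarrow> (\<forall>xs\<in>idx d m. T xs = 0)"

definition is_DP :: "nat \<Rightarrow> nat \<Rightarrow> (nat list \<Rightarrow> real) \<Rightarrow> bool" where
  "is_DP d r X \<longleftrightarrow> (\<forall>u :: nat \<Rightarrow> nat \<Rightarrow> real. (\<forall>j<r. future_causal d (u j)) \<longrightarrow>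
      (\<Sum>xs\<in>idx d r. X xs * (\<Prod>j<r. u j (xs ! j))) \<ge> 0)"

definition is_negDP :: "nat \<Rightarrow> nat \<Rightarrow> (nat list \<Rightarrow> real) \<Rightarrow> bool" where
  "is_negDP d r X \<longleftrightarrow> is_DP d r (\<lambda>xs. - X xs)"

end

theory Submission
  imports Defs "HOL-Analysis.Convex"
begin

lemma mink_split:
  assumes "d \<ge> 1"
  shows "mink d v w = v 0 * w 0 - (\<Sum>a\<in>{1..<d}. v a * w a)"
proof -
  have e: "{..<d} = insert 0 {1..<d}" using assms by auto
  have "mink d v w = eta 0 * v 0 * w 0 + (\<Sum>a\<in>{1..<d}. eta a * v a * w a)"
    unfolding mink_def e by (subst sum.insert) auto
  also have "(\<Sum>a\<in>{1..<d}. eta a * v a * w a) = - (\<Sum>a\<in>{1..<d}. v a * w a)"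
    by (simp add: eta_def sum_negf[symmetric])
  finally show ?thesis by (simp add: eta_def)
qed

lemma null_pair_minor:
  assumes d: "d \<ge> 1" and vv: "mink d v v = 0" and ww: "mink d w w = 0" and vw: "mink d v w = 0"
    and a: "a < d" and b: "b < d"
  shows "v a * w b = v b * w a"
proof -
  define Svv where "Svv = (\<Sum>a\<in>{1..<d}. v a * v a)"
  define Sww where "Sww = (\<Sum>a\<in>{1..<d}. w a * w a)"
  define Svw where "Svw = (\<Sum>a\<in>{1..<d}. v a * w a)"
  have 1: "Svv = v 0 * v 0" using vv mink_split[OF d, of v v] Svv_def by simp
  have 2: "Sww = w 0 * w 0" using ww mink_split[OF d, of w w] Sww_def by simp
  have 3: "Svw = v 0 * w 0" using vw mink_split[OF d, of v w] Svw_def by simp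
  have "(\<Sum>c\<in>{1..<d}. (v 0 * w c - v c * w 0)^2)
      = v 0 * v 0 * Sww - 2 * v 0 * w 0 * Svw + w 0 * w 0 * Svv"
    unfolding Svv_def Sww_def Svw_def
    by (simp add: power2_eq_square algebra_simps sum.distrib sum_subtractf sum_distrib_left)
  also have "\<dots> = 0" using 1 2 3 by (simp add: algebra_simps)
  finally have "\<forall>c\<in>{1..<d}. (v 0 * w c - v c * w 0)^2 = 0"
    by (subst sum_nonneg_eq_0_iff[symmetric]) auto
  hence tw: "\<And>c. c < d \<Longrightarrow> v 0 * w c = v c * w 0"
    by (metis atLeastLessThan_iff less_one linorder_not_le power_eq_0_iff right_minus_eq)
  show ?thesis
  proof (cases "v 0 = 0")
    case True
    hence "Svv = 0" using 1 by simp
    hence "\<forall>c\<in>{1..<d}. v c * v c = 0" unfolding Svv_def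
      by (subst sum_nonneg_eq_0_iff[symmetric]) auto
    hence "\<And>c. c < d \<Longrightarrow> v c = 0" using True
      by (metis atLeastLessThan_iff less_one linorder_not_le mult_zero_left no_zero_divisors)
    thus ?thesis using a b by simp
  next
    case False
    have "v 0 * (v a * w b) = v a * (v 0 * w b)" by simp
    also have "\<dots> = v a * (v b * w 0)" using tw b by simp
    also have "\<dots> = v b * (v a * w 0)" by simp
    also have "\<dots> = v 0 * (v b * w a)" using tw a by simp
    finally show ?thesis using False by simp
  qed
qed

definition rem_at :: "nat \<Rightarrow> nat list \<Rightarrow> nat list" where
  "rem_at i x = take i x @ drop (Suc i) x"

lemma ins_rem: "i < length x \<Longrightarrow> ins_at i a (rem_at i x) = x[i := a]"
  unfolding ins_at_def rem_at_def by (simp add: upd_conv_take_nth_drop min_def)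

lemma rem_idx: "x \<in> idx d r \<Longrightarrow> i < r \<Longrightarrow> rem_at i x \<in> idx d (r - 1)"
  unfolding idx_def rem_at_def using set_take_subset set_drop_subset by fastforce

lemma contr_zero:
  assumes H: "tensor_zero d (2 * r - 2) (self_contr d r i T)" and r: "r \<ge> 1"
    and p: "p \<in> idx d (r - 1)" and q: "q \<in> idx d (r - 1)"
  shows "mink d (\<lambda>c. T (ins_at i c p)) (\<lambda>c. T (ins_at i c q)) = 0"
proof -
  have "p @ q \<in> idx d (2 * r - 2)" using p q r unfolding idx_def by auto
  hence "self_contr d r i T (p @ q) = 0" using H unfolding tensor_zero_def by blast
  moreover have "take (r - 1) (p @ q) = p" "drop (r - 1) (p @ q) = q" using p unfolding idx_def by auto
  ultimately show ?thesis unfolding self_contr_def mink_def by simp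
qed

lemma exchange:
  assumes H: "\<forall>i<r. tensor_zero d (2 * r - 2) (self_contr d r i T)" and r: "r \<ge> 1" and d: "d \<ge> 1"
    and x: "x \<in> idx d r" and y: "y \<in> idx d r" and i: "i < r" and a: "a < d" and b: "b < d"
  shows "T (x[i := a]) * T (y[i := b]) = T (x[i := b]) * T (y[i := a])"
proof -
  have lx: "length x = r" and ly: "length y = r" using x y unfolding idx_def by auto
  let ?v = "\<lambda>c. T (ins_at i c (rem_at i x))"
  let ?w = "\<lambda>c. T (ins_at i c (rem_at i y))"
  have Hi: "tensor_zero d (2 * r - 2) (self_contr d r i T)" using H i by blast
  have px: "rem_at i x \<in> idx d (r - 1)" and py: "rem_at i y \<in> idx d (r - 1)"
    using rem_idx x y i by auto
  have "?v a * ?w b = ?v b * ?w a"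
    by (rule null_pair_minor[OF d contr_zero[OF Hi r px px] contr_zero[OF Hi r py py]
          contr_zero[OF Hi r px py] a b])
  thus ?thesis using ins_rem i lx ly by simp
qed

lemma idx_nth: "xs \<in> idx d r \<Longrightarrow> j < r \<Longrightarrow> xs ! j < d"
  unfolding idx_def using nth_mem by fastforce

lemma update_idx: "x \<in> idx d r \<Longrightarrow> a < d \<Longrightarrow> x[i := a] \<in> idx d r"
  unfolding idx_def using set_update_subset_insert by fastforce

lemma product_form:
  assumes H: "\<forall>i<r. tensor_zero d (2 * r - 2) (self_contr d r i T)" and r: "r \<ge> 1" and d: "d \<ge> 1"
    and x0: "x0 \<in> idx d r" and x: "x \<in> idx d r"
  shows "T x * T x0 ^ r = T x0 * (\<Prod>j<r. T (x0[j := x ! j]))"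
proof -
  define z where "z m = map (\<lambda>j. if j < m then x ! j else x0 ! j) [0..<r]" for m
  have lx: "length x = r" and lx0: "length x0 = r" using x x0 unfolding idx_def by auto
  have zidx: "z m \<in> idx d r" for m
    using x x0 unfolding z_def idx_def by (auto simp: subset_iff in_set_conv_nth; metis)
  have step: "z (Suc m) = (z m)[m := x ! m]" if "m < r" for m
    unfolding z_def using that by (intro nth_equalityI) (auto simp: nth_list_update)
  have zm: "(z m)[m := x0 ! m] = z m" if "m < r" for m
    unfolding z_def using that by (intro nth_equalityI) (auto simp: nth_list_update)
  have "m \<le> r \<Longrightarrow> T (z m) * T x0 ^ m = T x0 * (\<Prod>j<m. T (x0[j := x ! j]))" for m
  proof (induction m)
    case 0
    have "z 0 = x0" unfolding z_def using lx0 by (intro nth_equalityI) auto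
    thus ?case by simp
  next
    case (Suc m)
    hence m: "m < r" by simp
    have xm: "x ! m < d" "x0 ! m < d" using idx_nth x x0 m by auto
    have e: "T ((z m)[m := x ! m]) * T (x0[m := x0 ! m]) = T ((z m)[m := x0 ! m]) * T (x0[m := x ! m])"
      by (rule exchange[OF H r d zidx x0 m xm])
    have "T (z (Suc m)) * T x0 = T (z m) * T (x0[m := x ! m])"
      using e step[OF m] zm[OF m] by simp
    hence "T (z (Suc m)) * T x0 ^ Suc m = (T (z m) * T x0 ^ m) * T (x0[m := x ! m])"
      by (simp add: algebra_simps)
    also have "\<dots> = T x0 * (\<Prod>j<Suc m. T (x0[j := x ! j]))" using Suc m by simp
    finally show ?case .
  qed
  moreover have "z r = x" unfolding z_def using lx by (intro nth_equalityI) auto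
  ultimately show ?thesis by force
qed

lemma sum_idx_prod:
  "(\<Sum>xs\<in>idx d r. \<Prod>j<r. f j (xs ! j)) = (\<Prod>j<r. \<Sum>a<d. (f j a :: real))"
proof (induction r arbitrary: f)
  case 0
  have "idx d 0 = {[]}" unfolding idx_def by auto
  thus ?case by simp
next
  case (Suc r)
  have e: "idx d (Suc r) = (\<lambda>(xs, a). a # xs) ` (idx d r \<times> {..<d})"
    unfolding idx_def using lists_length_Suc_eq[of "{..<d}" r] by (simp add: conj_commute)
  have inj: "inj_on (\<lambda>(xs, a). a # xs) (idx d r \<times> {..<d})"
    by (auto simp: inj_on_def)
  have "(\<Sum>xs\<in>idx d (Suc r). \<Prod>j<Suc r. f j (xs ! j))
      = (\<Sum>(xs, a)\<in>idx d r \<times> {..<d}. \<Prod>j<Suc r. f j ((a # xs) ! j))"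
    unfolding e by (subst sum.reindex[OF inj]) (simp add: case_prod_unfold)
  also have "\<dots> = (\<Sum>(xs, a)\<in>idx d r \<times> {..<d}. f 0 a * (\<Prod>j<r. f (Suc j) (xs ! j)))"
    by (subst prod.lessThan_Suc_shift) simp
  also have "\<dots> = (\<Sum>xs\<in>idx d r. \<Sum>a<d. f 0 a * (\<Prod>j<r. f (Suc j) (xs ! j)))"
    by (subst sum.cartesian_product[symmetric]) simp
  also have "\<dots> = (\<Sum>a<d. f 0 a) * (\<Sum>xs\<in>idx d r. (\<Prod>j<r. f (Suc j) (xs ! j)))"
    by (simp add: sum_distrib_left sum_distrib_right mult.commute)
  also have "\<dots> = (\<Sum>a<d. f 0 a) * (\<Prod>j<r. \<Sum>a<d. f (Suc j) a)"
    using Suc.IH[of "\<lambda>j. f (Suc j)"] by simp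
  also have "\<dots> = (\<Prod>j<Suc r. \<Sum>a<d. f j a)"
    by (subst prod.lessThan_Suc_shift) simp
  finally show ?case .
qed

lemma null_future_sign:
  assumes d: "d \<ge> 1" and kk: "mink d k k = 0" and u: "future_causal d u"
  shows "k 0 * (\<Sum>a<d. k a * u a) \<ge> 0"
proof -
  define S where "S = (\<Sum>a\<in>{1..<d}. k a * u a)"
  define Sk where "Sk = (\<Sum>a\<in>{1..<d}. (k a)\<^sup>2)"
  define Su where "Su = (\<Sum>a\<in>{1..<d}. (u a)\<^sup>2)"
  have e: "{..<d} = insert 0 {1..<d}" using d by auto
  have sum: "(\<Sum>a<d. k a * u a) = k 0 * u 0 + S" unfolding S_def e by (subst sum.insert) auto
  have cs: "S\<^sup>2 \<le> Sk * Su" unfolding S_def Sk_def Su_def by (rule Cauchy_Schwarz_ineq_sum)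
  have Sk: "Sk = (k 0)\<^sup>2" using kk mink_split[OF d, of k k] unfolding Sk_def by (simp add: power2_eq_square)
  have "mink d u u \<ge> 0" using u unfolding future_causal_def causal_vec_def by simp
  hence Su: "Su \<le> (u 0)\<^sup>2" using mink_split[OF d, of u u] unfolding Su_def by (simp add: power2_eq_square)
  have u0: "u 0 > 0" using u unfolding future_causal_def by simp
  have "Sk * Su \<le> (k 0)\<^sup>2 * (u 0)\<^sup>2" using Sk Su by (simp add: mult_left_mono)
  with cs have S2: "S\<^sup>2 \<le> (\<bar>k 0\<bar> * u 0)\<^sup>2" by (simp add: power_mult_distrib)
  have Sabs: "\<bar>S\<bar> \<le> \<bar>k 0\<bar> * u 0"
  proof (rule power2_le_imp_le)
    show "\<bar>S\<bar>\<^sup>2 \<le> (\<bar>k 0\<bar> * u 0)\<^sup>2" using S2 by simp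
  qed (use u0 in simp)
  have "\<bar>k 0\<bar> * \<bar>S\<bar> \<le> \<bar>k 0\<bar> * (\<bar>k 0\<bar> * u 0)"
    using Sabs by (rule mult_left_mono) simp
  also have "\<bar>k 0\<bar> * (\<bar>k 0\<bar> * u 0) = (k 0)\<^sup>2 * u 0"
    by (simp add: power2_eq_square)
  finally have "\<bar>k 0 * S\<bar> \<le> (k 0)\<^sup>2 * u 0" by (simp add: abs_mult)
  hence "k 0 * S \<ge> - ((k 0)\<^sup>2 * u 0)" by linarith
  thus ?thesis unfolding sum by (simp add: algebra_simps power2_eq_square)
qed


lemma prod_upd:
  assumes "i < r" "length y = r"
  shows "(\<Prod>j<r. f j ((y[i := c]) ! j)) = f i c * (\<Prod>j\<in>{..<r}-{i}. f j (y ! j))"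
proof -
  have "(\<Prod>j<r. f j ((y[i := c]) ! j)) = f i ((y[i := c]) ! i) * (\<Prod>j\<in>{..<r}-{i}. f j ((y[i := c]) ! j))"
    using assms by (subst prod.remove[of "{..<r}" i]) auto
  also have "(\<Prod>j\<in>{..<r}-{i}. f j ((y[i := c]) ! j)) = (\<Prod>j\<in>{..<r}-{i}. f j (y ! j))"
    by (rule prod.cong) auto
  finally show ?thesis using assms by simp
qed

lemma ins_upd: "i \<le> length p \<Longrightarrow> ins_at i c p = (ins_at i 0 p)[i := c]"
  unfolding ins_at_def by (simp add: list_update_append min_def)

lemma ins_idx: "p \<in> idx d m \<Longrightarrow> c < d \<Longrightarrow> ins_at i c p \<in> idx d (Suc m)"
  unfolding idx_def ins_at_def using set_take_subset set_drop_subset by fastforce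

lemma take_drop_idx:
  assumes "xs \<in> idx d (2 * r - 2)" "r \<ge> 1"
  shows "take (r - 1) xs \<in> idx d (r - 1)" "drop (r - 1) xs \<in> idx d (r - 1)"
  using assms set_take_subset set_drop_subset unfolding idx_def by fastforce+

lemma backward:
  assumes r: "r \<ge> 1" and d: "d \<ge> 1"
    and h: "tensor_zero d r T \<or>
            (\<exists>k :: nat \<Rightarrow> nat \<Rightarrow> real. (\<forall>j<r. null_vec d (k j)) \<and>
                 (\<forall>xs\<in>idx d r. T xs = (\<Prod>j<r. k j (xs ! j))))"
  shows "\<forall>i<r. tensor_zero d (2 * r - 2) (self_contr d r i T)"
proof (intro allI impI)
  fix i assume i: "i < r"
  have rr: "Suc (r - 1) = r" using r by simp
  show "tensor_zero d (2 * r - 2) (self_contr d r i T)"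
    unfolding tensor_zero_def
  proof
    fix xs assume xs: "xs \<in> idx d (2 * r - 2)"
    define p where "p = take (r - 1) xs"
    define q where "q = drop (r - 1) xs"
    have p: "p \<in> idx d (r - 1)" and q: "q \<in> idx d (r - 1)"
      using take_drop_idx[OF xs r] p_def q_def by auto
    have pi: "ins_at i c p \<in> idx d r" "ins_at i c q \<in> idx d r" if "c < d" for c
      using ins_idx[OF p that] ins_idx[OF q that] rr by auto
    show "self_contr d r i T xs = 0"
      using h
    proof
      assume tz: "tensor_zero d r T"
      show ?thesis unfolding self_contr_def p_def[symmetric] q_def[symmetric]
        using pi tz unfolding tensor_zero_def by (intro sum.neutral) auto
    next
      assume "\<exists>k :: nat \<Rightarrow> nat \<Rightarrow> real. (\<forall>j<r. null_vec d (k j)) \<and>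
                 (\<forall>xs\<in>idx d r. T xs = (\<Prod>j<r. k j (xs ! j)))"
      then obtain k where kn: "\<forall>j<r. null_vec d (k j)"
        and kT: "\<forall>xs\<in>idx d r. T xs = (\<Prod>j<r. k j (xs ! j))" by blast
      have lp: "length p = r - 1" "length q = r - 1" using p q unfolding idx_def by auto
      have il: "i \<le> length p" "i \<le> length q" using lp i by auto
      have ll: "length (ins_at i 0 p) = r" "length (ins_at i 0 q) = r"
        using lp il rr unfolding ins_at_def by auto
      define P where "P = (\<Prod>j\<in>{..<r}-{i}. k j ((ins_at i 0 p) ! j))"
      define Q where "Q = (\<Prod>j\<in>{..<r}-{i}. k j ((ins_at i 0 q) ! j))"
      have Tp: "T (ins_at i c p) = k i c * P" if "c < d" for c
        using kT pi[OF that] ins_upd[OF il(1), of c] prod_upd[OF i ll(1)] P_def by simp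
      have Tq: "T (ins_at i c q) = k i c * Q" if "c < d" for c
        using kT pi[OF that] ins_upd[OF il(2), of c] prod_upd[OF i ll(2)] Q_def by simp
      have "self_contr d r i T xs = (\<Sum>c<d. eta c * (k i c * P) * (k i c * Q))"
        unfolding self_contr_def p_def[symmetric] q_def[symmetric]
        by (rule sum.cong) (auto simp: Tp Tq)
      also have "\<dots> = P * Q * mink d (k i) (k i)"
        unfolding mink_def by (simp add: sum_distrib_left algebra_simps)
      also have "mink d (k i) (k i) = 0" using kn i unfolding null_vec_def by simp
      finally show ?thesis by simp
    qed
  qed
qed

lemma forward:
  assumes H: "\<forall>i<r. tensor_zero d (2 * r - 2) (self_contr d r i T)" and r: "r \<ge> 1" and d: "d \<ge> 1"
  shows "tensor_zero d r T \<or>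
            (\<exists>k :: nat \<Rightarrow> nat \<Rightarrow> real. (\<forall>j<r. null_vec d (k j)) \<and>
                 (\<forall>xs\<in>idx d r. T xs = (\<Prod>j<r. k j (xs ! j))))"
proof (cases "tensor_zero d r T")
  case True thus ?thesis by simp
next
  case False
  then obtain x0 where x0: "x0 \<in> idx d r" and t0: "T x0 \<noteq> 0" unfolding tensor_zero_def by blast
  have lx0: "length x0 = r" using x0 unfolding idx_def by auto
  define al where "al j = (if j = 0 then T x0 else 1) / T x0" for j :: nat
  define k where "k j c = al j * T (x0[j := c])" for j c
  have al0: "al j \<noteq> 0" for j using t0 unfolding al_def by simp
  have rr: "Suc (r - 1) = r" using r by simp
  have "null_vec d (k j)" if j: "j < r" for j
  proof -
    have p: "rem_at j x0 \<in> idx d (r - 1)" using rem_idx[OF x0 j] .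
    have Hj: "tensor_zero d (2 * r - 2) (self_contr d r j T)" using H j by blast
    have m0: "mink d (\<lambda>c. T (ins_at j c (rem_at j x0))) (\<lambda>c. T (ins_at j c (rem_at j x0))) = 0"
      by (rule contr_zero[OF Hj r p p])
    have "mink d (k j) (k j) = (al j)\<^sup>2 * mink d (\<lambda>c. T (ins_at j c (rem_at j x0))) (\<lambda>c. T (ins_at j c (rem_at j x0)))"
      unfolding mink_def k_def using ins_rem[of j x0] j lx0
      by (simp add: sum_distrib_left power2_eq_square algebra_simps)
    hence mk: "mink d (k j) (k j) = 0" using m0 by simp
    have "k j (x0 ! j) \<noteq> 0" unfolding k_def using al0 t0 by simp
    moreover have "x0 ! j < d" using idx_nth[OF x0 j] .
    ultimately have "nonzero_vec d (k j)" unfolding nonzero_vec_def by blast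
    thus ?thesis using mk unfolding null_vec_def by simp
  qed
  moreover have "T x = (\<Prod>j<r. k j (x ! j))" if x: "x \<in> idx d r" for x
  proof -
    have pf: "T x * T x0 ^ r = T x0 * (\<Prod>j<r. T (x0[j := x ! j]))"
      by (rule product_form[OF H r d x0 x])
    have pa: "(\<Prod>j<r. al j) = 1 / T x0 ^ (r - 1)"
    proof -
      have "(\<Prod>j<r. al j) = (\<Prod>j<Suc (r - 1). al j)" using rr by simp
      also have "\<dots> = al 0 * (\<Prod>j<r - 1. al (Suc j))" by (rule prod.lessThan_Suc_shift)
      also have "\<dots> = 1 / T x0 ^ (r - 1)" unfolding al_def using t0
        by (simp add: power_one_over)
      finally show ?thesis .
    qed
    have "(\<Prod>j<r. k j (x ! j)) = (\<Prod>j<r. al j) * (\<Prod>j<r. T (x0[j := x ! j]))"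
      unfolding k_def by (simp add: prod.distrib)
    also have "\<dots> = (T x * T x0 ^ r) / (T x0 * T x0 ^ (r - 1))" using pf t0 pa by simp
    also have "T x0 * T x0 ^ (r - 1) = T x0 ^ r" using rr by (metis power_Suc)
    also have "(T x * T x0 ^ r) / T x0 ^ r = T x" using t0 by simp
    finally show ?thesis by simp
  qed
  ultimately show ?thesis by blast
qed

lemma dp_part:
  assumes d: "d \<ge> 1"
    and h: "tensor_zero d r T \<or>
            (\<exists>k :: nat \<Rightarrow> nat \<Rightarrow> real. (\<forall>j<r. null_vec d (k j)) \<and>
                 (\<forall>xs\<in>idx d r. T xs = (\<Prod>j<r. k j (xs ! j))))"
  shows "is_DP d r T \<or> is_negDP d r T"
  using h
proof
  assume tz: "tensor_zero d r T"
  have "is_DP d r T" unfolding is_DP_def using tz unfolding tensor_zero_def by simp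
  thus ?thesis by simp
next
  assume "\<exists>k :: nat \<Rightarrow> nat \<Rightarrow> real. (\<forall>j<r. null_vec d (k j)) \<and>
                 (\<forall>xs\<in>idx d r. T xs = (\<Prod>j<r. k j (xs ! j)))"
  then obtain k where kn: "\<forall>j<r. null_vec d (k j)"
    and kT: "\<forall>xs\<in>idx d r. T xs = (\<Prod>j<r. k j (xs ! j))" by blast
  have k0: "k j 0 \<noteq> 0" if j: "j < r" for j
  proof
    assume z: "k j 0 = 0"
    have nz: "nonzero_vec d (k j)" and mk: "mink d (k j) (k j) = 0"
      using kn j unfolding null_vec_def by auto
    have "(\<Sum>a\<in>{1..<d}. k j a * k j a) = 0" using mk mink_split[OF d, of "k j" "k j"] z by simp
    hence "\<forall>a\<in>{1..<d}. k j a * k j a = 0" by (subst sum_nonneg_eq_0_iff[symmetric]) auto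
    hence "\<forall>a<d. k j a = 0" using z
      by (metis atLeastLessThan_iff less_one linorder_not_le no_zero_divisors)
    thus False using nz unfolding nonzero_vec_def by blast
  qed
  define \<sigma> where "\<sigma> = (\<Prod>j<r. sgn (k j 0))"
  have sabs: "\<bar>\<sigma>\<bar> = 1" unfolding \<sigma>_def abs_prod using k0 by (simp add: abs_sgn)
  have key: "\<sigma> * (\<Sum>xs\<in>idx d r. T xs * (\<Prod>j<r. u j (xs ! j))) \<ge> 0"
    if u: "\<forall>j<r. future_causal d (u j)" for u
  proof -
    have "(\<Sum>xs\<in>idx d r. T xs * (\<Prod>j<r. u j (xs ! j)))
        = (\<Sum>xs\<in>idx d r. \<Prod>j<r. k j (xs ! j) * u j (xs ! j))"
      using kT by (intro sum.cong) (auto simp: prod.distrib)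
    also have "\<dots> = (\<Prod>j<r. \<Sum>a<d. k j a * u j a)" by (rule sum_idx_prod)
    finally have e: "(\<Sum>xs\<in>idx d r. T xs * (\<Prod>j<r. u j (xs ! j))) = (\<Prod>j<r. \<Sum>a<d. k j a * u j a)" .
    have "sgn (k j 0) * (\<Sum>a<d. k j a * u j a) \<ge> 0" if j: "j < r" for j
    proof -
      have "k j 0 * (\<Sum>a<d. k j a * u j a) \<ge> 0"
        using null_future_sign[OF d _ ] kn u j unfolding null_vec_def by blast
      thus ?thesis using k0[OF j]
        by (cases "k j 0 > 0") (auto simp: zero_le_mult_iff)
    qed
    hence "(\<Prod>j<r. sgn (k j 0) * (\<Sum>a<d. k j a * u j a)) \<ge> 0" by (intro prod_nonneg) auto
    thus ?thesis unfolding e \<sigma>_def by (simp add: prod.distrib)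
  qed
  show ?thesis
  proof (cases "\<sigma> = 1")
    case True
    hence "is_DP d r T" unfolding is_DP_def using key by simp
    thus ?thesis by simp
  next
    case False
    hence "\<sigma> = -1" using sabs by linarith
    hence "is_negDP d r T" unfolding is_negDP_def is_DP_def using key
      by (simp add: sum_negf)
    thus ?thesis by simp
  qed
qed

theorem mainTheorem15:
  fixes d r :: nat and T :: "nat list \<Rightarrow> real"
  assumes "d \<ge> 2" and "r \<ge> 1"
  shows "((\<forall>i<r. tensor_zero d (2 * r - 2) (self_contr d r i T)) \<longleftrightarrow>
           (tensor_zero d r T \<or>
            (\<exists>k :: nat \<Rightarrow> nat \<Rightarrow> real. (\<forall>j<r. null_vec d (k j)) \<and>
                 (\<forall>xs\<in>idx d r. T xs = (\<Prod>j<r. k j (xs ! j))))))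
       \<and> ((\<forall>i<r. tensor_zero d (2 * r - 2) (self_contr d r i T)) \<longrightarrow>
           is_DP d r T \<or> is_negDP d r T)"
proof -
  have d: "d \<ge> 1" using assms by simp
  show ?thesis using forward[OF _ assms(2) d] backward[OF assms(2) d] dp_part[OF d] by blast
qed

end
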